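(* For every integer $n\ge 3$, $\chi_{ei}(W_n)=n+1$.
   Context: All graphs are finite and simple. The wheel $W_n$ is the graph on $n+1$ vertices obtained from the cycle $C_n$ by adding one new vertex adjacent to all vertices of the cycle. A path $P_4$ in $G$ is a sequence $uxyv$ of four distinct vertices with $ux,xy,yv\in E(G)$; $u,v$ are its end vertices. An $e$-injective $k$-coloring of $G$ is a function $f:V(G)\to\{1,\dots,k\}$ with $f(u)\ne f(v)$ whenever $u,v$ are the end vertices of some path $P_4$ in $G$; $\chi_{ei}(G)$ is the least such $k$. *)

theory Defs
  imports Main
begin

text \<open>A finite simple graph is given by a vertex set V and a symmetric irreflexive
  adjacency relation E (only its restriction to V matters).\<close>

definition P4_ends :: "'a set \<Rightarrow> ('a \<Rightarrow> 'a \<Rightarrow> bool) \<Rightarrow> 'a \<Rightarrow> 'a \<Rightarrow> bool" where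
  "P4_ends V E u v \<longleftrightarrow> (\<exists>x y. u \<in> V \<and> x \<in> V \<and> y \<in> V \<and> v \<in> V \<and>
      distinct [u, x, y, v] \<and> E u x \<and> E x y \<and> E y v)"

definition e_injective_coloring ::
  "'a set \<Rightarrow> ('a \<Rightarrow> 'a \<Rightarrow> bool) \<Rightarrow> nat \<Rightarrow> ('a \<Rightarrow> nat) \<Rightarrow> bool" where
  "e_injective_coloring V E k f \<longleftrightarrow>
     (\<forall>v\<in>V. f v \<in> {1..k}) \<and> (\<forall>u v. P4_ends V E u v \<longrightarrow> f u \<noteq> f v)"

definition chi_ei :: "'a set \<Rightarrow> ('a \<Rightarrow> 'a \<Rightarrow> bool) \<Rightarrow> nat" where
  "chi_ei V E = (LEAST k. \<exists>f. e_injective_coloring V E k f)"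

text \<open>The wheel W_n: cycle vertices 0..n-1 (i adjacent to (i+1) mod n), hub vertex n.\<close>

definition wheel_V :: "nat \<Rightarrow> nat set" where
  "wheel_V n = {0..n}"

definition wheel_E :: "nat \<Rightarrow> nat \<Rightarrow> nat \<Rightarrow> bool" where
  "wheel_E n u v \<longleftrightarrow> u \<noteq> v \<and> u \<le> n \<and> v \<le> n \<and>
     ((u = n \<and> v < n) \<or> (v = n \<and> u < n) \<or>
      (u < n \<and> v < n \<and> (v = (u + 1) mod n \<or> u = (v + 1) mod n)))"

end

theory Submission
  imports Defs
begin

lemma hub_cyc:
  assumes n: "n \<ge> 3" and i: "i < n"
  shows "\<exists>x y. x < n \<and> y < n \<and> distinct [n, x, y, i] \<and> wheel_E n n x \<and> wheel_E n x y \<and> wheel_E n y i"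
proof -
  consider "i + 2 < n" | "i + 2 = n" | "i + 1 = n" using i by linarith
  then show ?thesis
  proof cases
    case 1
    then show ?thesis
      by (rule_tac x="i+2" in exI, rule_tac x="i+1" in exI) (auto simp: wheel_E_def)
  next
    case 2
    then show ?thesis using n
      by (rule_tac x="0" in exI, rule_tac x="n - 1" in exI) (auto simp: wheel_E_def)
  next
    case 3
    then show ?thesis using n
      by (rule_tac x="1" in exI, rule_tac x="0" in exI) (auto simp: wheel_E_def)
  qed
qed

lemma cyc_cyc:
  assumes n: "n \<ge> 3" and i: "i < n" and j: "j < n" and ij: "i \<noteq> j"
  shows "\<exists>y. y < n \<and> distinct [i, n, y, j] \<and> wheel_E n i n \<and> wheel_E n n y \<and> wheel_E n y j"
proof -
  define a where "a = (if j + 1 < n then j + 1 else 0)"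
  define b where "b = (if j > 0 then j - 1 else n - 1)"
  have a: "a < n" "a \<noteq> j" "wheel_E n a j"
  proof -
    show "a < n" "a \<noteq> j" using n j unfolding a_def by auto
    show "wheel_E n a j"
    proof (cases "j + 1 < n")
      case True then show ?thesis using n unfolding a_def wheel_E_def by auto
    next
      case False then have "j + 1 = n" using j by simp
      then show ?thesis using n unfolding a_def wheel_E_def by auto
    qed
  qed
  have b: "b < n" "b \<noteq> j" "wheel_E n b j" using n j unfolding b_def wheel_E_def by auto
  have ab: "a \<noteq> b" using n j unfolding a_def b_def by auto
  show ?thesis
  proof (cases "a = i")
    case True
    then show ?thesis using b ab i j ij n by (rule_tac x=b in exI) (auto simp: wheel_E_def)
  next
    case False
    then show ?thesis using a i j ij n by (rule_tac x=a in exI) (auto simp: wheel_E_def)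
  qed
qed

lemma all_P4:
  assumes n: "n \<ge> 3" and u: "u \<in> wheel_V n" and v: "v \<in> wheel_V n" and uv: "u \<noteq> v"
  shows "P4_ends (wheel_V n) (wheel_E n) u v"
proof -
  have sym: "wheel_E n a b \<Longrightarrow> wheel_E n b a" for a b unfolding wheel_E_def by auto
  consider "u = n" "v < n" | "v = n" "u < n" | "u < n" "v < n"
    using u v uv unfolding wheel_V_def by fastforce
  then show ?thesis
  proof cases
    case 1
    then obtain x y where "x < n \<and> y < n \<and> distinct [n, x, y, v] \<and> wheel_E n n x \<and> wheel_E n x y \<and> wheel_E n y v"
      using hub_cyc[OF n] by blast
    then show ?thesis using 1 unfolding P4_ends_def wheel_V_def by (rule_tac x=x in exI, rule_tac x=y in exI) auto
  next
    case 2
    then obtain x y where "x < n \<and> y < n \<and> distinct [n, x, y, u] \<and> wheel_E n n x \<and> wheel_E n x y \<and> wheel_E n y u"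
      using hub_cyc[OF n] by blast
    then show ?thesis using 2 sym unfolding P4_ends_def wheel_V_def
      by (rule_tac x=y in exI, rule_tac x=x in exI) auto
  next
    case 3
    then obtain y where "y < n \<and> distinct [u, n, y, v] \<and> wheel_E n u n \<and> wheel_E n n y \<and> wheel_E n y v"
      using cyc_cyc[OF n _ _ uv] by blast
    then show ?thesis using 3 unfolding P4_ends_def wheel_V_def
      by (rule_tac x=n in exI, rule_tac x=y in exI) auto
  qed
qed

theorem proposition3p4:
  fixes n :: nat
  assumes "n \<ge> 3"
  shows "chi_ei (wheel_V n) (wheel_E n) = n + 1"
  unfolding chi_ei_def
proof (rule Least_equality)
  show "\<exists>f. e_injective_coloring (wheel_V n) (wheel_E n) (n + 1) f"
    by (rule exI[of _ "\<lambda>v. v + 1"])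
      (auto simp: e_injective_coloring_def wheel_V_def P4_ends_def)
next
  fix k assume "\<exists>f. e_injective_coloring (wheel_V n) (wheel_E n) k f"
  then obtain f where f: "e_injective_coloring (wheel_V n) (wheel_E n) k f" by blast
  have inj: "inj_on f (wheel_V n)"
    using f all_P4[OF assms] unfolding inj_on_def e_injective_coloring_def by blast
  have sub: "f ` wheel_V n \<subseteq> {1..k}" using f unfolding e_injective_coloring_def by blast
  have "card (wheel_V n) \<le> card {1..k}"
    using card_inj_on_le[OF inj sub] by simp
  then show "n + 1 \<le> k" by (simp add: wheel_V_def)
qed

end
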